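(* Let $0<\omega_-<\omega_+$ and set $\boldsymbol\omega=(\omega_-,\omega_+)$. (i) If $\omega_+\neq 3\omega_-$, then for every $(\boldsymbol\alpha,\boldsymbol\beta)\in\mathbb N^2\times\mathbb N^2$ with $|\boldsymbol\alpha+\boldsymbol\beta|=4$ and $\boldsymbol\alpha\neq\boldsymbol\beta$, $$|\boldsymbol\omega\cdot(\boldsymbol\alpha-\boldsymbol\beta)|\geq \gamma:=\min\{\omega_-,\ \omega_+-\omega_-,\ |3\omega_--\omega_+|\}>0.$$ (ii) If $\omega_+=3\omega_-$, then for every $(\boldsymbol\alpha,\boldsymbol\beta)\in\mathbb N^2\times\mathbb N^2$ with $|\boldsymbol\alpha+\boldsymbol\beta|=4$, $\boldsymbol\alpha\neq\boldsymbol\beta$ and $(\boldsymbol\alpha,\boldsymbol\beta)\notin\{((3,0),(0,1)),\ ((0,1),(3,0))\}$, $$|\boldsymbol\omega\cdot(\boldsymbol\alpha-\boldsymbol\beta)|\geq \gamma_{\rm res}:=\min\{\omega_-,\ \omega_+-\omega_-\}>0.$$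
   Context: For $\boldsymbol\alpha=(\alpha_1,\alpha_2),\boldsymbol\beta=(\beta_1,\beta_2)\in\mathbb N^2$ (with $\mathbb N$ including $0$), $|\boldsymbol\alpha+\boldsymbol\beta|:=\alpha_1+\alpha_2+\beta_1+\beta_2$, and $\boldsymbol\omega\cdot(\boldsymbol\alpha-\boldsymbol\beta)=\omega_-(\alpha_1-\beta_1)+\omega_+(\alpha_2-\beta_2)$. *)

theory Defs
  imports Main Complex_Main
begin

definition len2 :: "nat \<times> nat \<Rightarrow> nat \<times> nat \<Rightarrow> nat" where
  "len2 a b = fst a + snd a + fst b + snd b"

definition omega_dot :: "real \<Rightarrow> real \<Rightarrow> nat \<times> nat \<Rightarrow> nat \<times> nat \<Rightarrow> real" where
  "omega_dot wm wp a b =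
     wm * (real (fst a) - real (fst b)) + wp * (real (snd a) - real (snd b))"

end

theory Submission
  imports Defs
begin

lemma dbound:
  fixes d1 d2 :: int and wm wp :: real
  assumes "\<bar>d1\<bar> + \<bar>d2\<bar> \<le> 4" "even (d1 + d2)" "(d1,d2) \<noteq> (0,0)" "0 < wm" "wm < wp"
  shows "\<bar>wm * d1 + wp * d2\<bar> \<ge> min wm (min (wp - wm) \<bar>3 * wm - wp\<bar>) \<and>
    ((d1,d2) \<noteq> (3,-1) \<and> (d1,d2) \<noteq> (-3,1) \<longrightarrow> \<bar>wm * d1 + wp * d2\<bar> \<ge> min wm (wp - wm))"
proof -
  have h1: "d1 = -4 \<or> d1 = -3 \<or> d1 = -2 \<or> d1 = -1 \<or> d1 = 0 \<or> d1 = 1 \<or> d1 = 2 \<or> d1 = 3 \<or> d1 = 4" using assms(1) by linarith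
  have h2: "d2 = -4 \<or> d2 = -3 \<or> d2 = -2 \<or> d2 = -1 \<or> d2 = 0 \<or> d2 = 1 \<or> d2 = 2 \<or> d2 = 3 \<or> d2 = 4" using assms(1) by linarith
  from h1 h2 show ?thesis using assms by (elim disjE; simp add: min_def abs_if; linarith)
qed

theorem proposition4p1:
  fixes wm wp :: real
  assumes "0 < wm" and "wm < wp"
  shows "(wp \<noteq> 3 * wm \<longrightarrow>
            (Min {wm, wp - wm, \<bar>3 * wm - wp\<bar>} > 0 \<and>
             (\<forall>a b :: nat \<times> nat. len2 a b = 4 \<and> a \<noteq> b \<longrightarrow>
                \<bar>omega_dot wm wp a b\<bar> \<ge> Min {wm, wp - wm, \<bar>3 * wm - wp\<bar>})))
       \<and> (wp = 3 * wm \<longrightarrow>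
            (min wm (wp - wm) > 0 \<and>
             (\<forall>a b :: nat \<times> nat. len2 a b = 4 \<and> a \<noteq> b \<and>
                (a, b) \<notin> {((3,0),(0,1)), ((0,1),(3,0))} \<longrightarrow>
                \<bar>omega_dot wm wp a b\<bar> \<ge> min wm (wp - wm))))"
proof -
  have M: "Min {wm, wp - wm, \<bar>3 * wm - wp\<bar>} = min wm (min (wp - wm) \<bar>3 * wm - wp\<bar>)"
    by (simp add: min.assoc)
  have main: "\<bar>omega_dot wm wp (a1,a2) (b1,b2)\<bar> \<ge> min wm (min (wp - wm) \<bar>3 * wm - wp\<bar>)
     \<and> (((a1,a2),(b1,b2)) \<notin> {((3,0),(0,1)), ((0,1),(3,0))} \<longrightarrow> \<bar>omega_dot wm wp (a1,a2) (b1,b2)\<bar> \<ge> min wm (wp - wm))"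
    if s: "a1 + a2 + b1 + b2 = 4" and ne: "(a1,a2) \<noteq> (b1,b2)" for a1 a2 b1 b2 :: nat
  proof -
    define d1 where "d1 = int a1 - int b1"
    define d2 where "d2 = int a2 - int b2"
    have od: "omega_dot wm wp (a1,a2) (b1,b2) = wm * d1 + wp * d2"
      by (simp add: omega_dot_def d1_def d2_def)
    have c1: "\<bar>d1\<bar> + \<bar>d2\<bar> \<le> 4" using s unfolding d1_def d2_def by linarith
    have c2: "even (d1 + d2)"
    proof -
      have si: "int a1 + int a2 + int b1 + int b2 = 4" using s by linarith
      have "d1 + d2 = 4 - 2 * (int b1 + int b2)" using si unfolding d1_def d2_def by (simp add: algebra_simps)
      thus ?thesis by simp
    qed
    have c3: "(d1,d2) \<noteq> (0,0)" using ne unfolding d1_def d2_def by auto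
    have c4: "((a1,a2),(b1,b2)) \<notin> {((3,0),(0,1)), ((0,1),(3,0))} \<Longrightarrow> (d1,d2) \<noteq> (3,-1) \<and> (d1,d2) \<noteq> (-3,1)"
      using s unfolding d1_def d2_def by auto
    show ?thesis using dbound[OF c1 c2 c3 assms] c4 unfolding od by blast
  qed
  show ?thesis
  proof (intro conjI impI allI)
    assume "wp \<noteq> 3 * wm"
    thus "Min {wm, wp - wm, \<bar>3 * wm - wp\<bar>} > 0" unfolding M using assms by auto
  next
    fix a b :: "nat \<times> nat"
    assume "len2 a b = 4 \<and> a \<noteq> b"
    thus "\<bar>omega_dot wm wp a b\<bar> \<ge> Min {wm, wp - wm, \<bar>3 * wm - wp\<bar>}"
      unfolding M using main[of "fst a" "snd a" "fst b" "snd b"] by (auto simp: len2_def)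
  next
    show "min wm (wp - wm) > 0" using assms by auto
  next
    fix a b :: "nat \<times> nat"
    assume "len2 a b = 4 \<and> a \<noteq> b \<and> (a, b) \<notin> {((3,0),(0,1)), ((0,1),(3,0))}"
    thus "\<bar>omega_dot wm wp a b\<bar> \<ge> min wm (wp - wm)"
      using main[of "fst a" "snd a" "fst b" "snd b"] by (auto simp: len2_def)
  qed
qed

end
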